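(* Let $\nu>0$, $d\ge1$ an integer and $m\ge1$ an integer. Then \[ I(d,\nu,m):=\sum_{n>m}\ \sum_{q\in\mathbb{Z}^{d-1}}\left(n^2+|q|^2\right)^{-\nu-d/2}\;\le\;\frac{\beta(d,\nu)}{m^{2\nu}}, \] where the sum over $n$ runs over integers $n>m$ and $\beta$ is defined by $\beta(1,\nu)=\frac{1}{2\nu}$ and $\beta(d,\nu)=\left(4+\frac{2}{2\nu+d-1}\right)\beta(d-1,\nu)$ for $d>1$. In particular, for any $\nu\ge 1/2$, $\beta(d,\nu)\le \frac{5^{d-1}}{2\nu}$ for all $d=1,2,\dots$.
   Context: $|q|$ denotes the Euclidean norm of $q\in\mathbb{Z}^{d-1}$; when $d=1$ the inner sum over $\mathbb{Z}^{0}$ consists of the single term $q=0$ (so $I(1,\nu,m)=\sum_{n>m}n^{-2\nu-1}$). *)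

theory Defs
  imports "HOL-Analysis.Analysis"
begin

text \<open>The integer lattice Z^k, realised as integer vectors indexed by {0..<k}
  (functions nat => int vanishing from index k on). For k = 0 it is the
  singleton containing the zero vector.\<close>
definition Zlat :: "nat \<Rightarrow> (nat \<Rightarrow> int) set" where
  "Zlat k = {q. \<forall>i\<ge>k. q i = 0}"

definition sqnorm :: "nat \<Rightarrow> (nat \<Rightarrow> int) \<Rightarrow> real" where
  "sqnorm k q = (\<Sum>i<k. (real_of_int (q i))^2)"

definition Iterm :: "nat \<Rightarrow> real \<Rightarrow> nat \<Rightarrow> (nat \<Rightarrow> int) \<Rightarrow> real" where
  "Iterm d \<nu> n q = (real n ^ 2 + sqnorm (d - 1) q) powr (- \<nu> - real d / 2)"

definition I :: "nat \<Rightarrow> real \<Rightarrow> nat \<Rightarrow> real" where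
  "I d \<nu> m = (\<Sum>\<^sub>\<infinity>n\<in>{m<..}. \<Sum>\<^sub>\<infinity>q\<in>Zlat (d - 1). Iterm d \<nu> n q)"

text \<open>beta(1,nu) = 1/(2 nu), beta(d,nu) = (4 + 2/(2 nu + d - 1)) beta(d-1,nu) for d > 1;
  the value at d = 0 is irrelevant (set to 0).\<close>
fun beta :: "nat \<Rightarrow> real \<Rightarrow> real" where
  "beta 0 \<nu> = 0"
| "beta (Suc 0) \<nu> = 1 / (2 * \<nu>)"
| "beta (Suc (Suc d)) \<nu> = (4 + 2 / (2 * \<nu> + real (Suc d))) * beta (Suc d) \<nu>"

end

theory Submission
  imports Defs
begin

lemma mvt_step:
  fixes a x :: real
  assumes a: "a > 0" and x: "x > 0"
  shows "a * (x+1) powr (-a-1) \<le> x powr (-a) - (x+1) powr (-a)"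
proof -
  have "\<And>z. x \<le> z \<Longrightarrow> z \<le> x+1 \<Longrightarrow> ((\<lambda>z. z powr (-a)) has_real_derivative (-a) * z powr (-a - 1)) (at z)"
    using x has_real_derivative_powr[of _ "-a"] by auto
  from MVT2[of x "x+1", OF _ this] obtain z where z: "x < z" "z < x+1"
    and eq: "(x+1) powr (-a) - x powr (-a) = (x + 1 - x) * ((-a) * z powr (-a-1))"
    by auto
  have "(x+1) powr (-a-1) \<le> z powr (-a-1)"
    using z x a by (intro powr_mono2') auto
  then have "a * (x+1) powr (-a-1) \<le> a * z powr (-a-1)" using a by simp
  then show ?thesis using eq by (simp add: algebra_simps)
qed

lemma tele:
  fixes a :: real and m :: nat
  assumes a: "a > 0" and m: "m \<ge> 1"
  shows "m \<le> T \<Longrightarrow> a * (\<Sum>n\<in>{m<..T}. real n powr (-a-1)) \<le> real m powr (-a) - real T powr (-a)"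
proof (induction T rule: dec_induct)
  case base
  then show ?case by simp
next
  case (step k)
  have e: "{m<..Suc k} = insert (Suc k) {m<..k}" using step by auto
  have "a * real (Suc k) powr (-a-1) \<le> real k powr (-a) - real (Suc k) powr (-a)"
    using mvt_step[OF a, of "real k"] step m by (simp add: add.commute)
  then show ?case using step e by (simp add: distrib_left)
qed

lemma tele2:
  fixes a :: real and m :: nat
  assumes a: "a > 0" and m: "m \<ge> 1"
  shows "(\<Sum>n\<in>{m<..T}. real n powr (-a-1)) \<le> real m powr (-a) / a"
proof (cases "m \<le> T")
  case True
  have "real T powr (-a) \<ge> 0" by simp
  then have "a * (\<Sum>n\<in>{m<..T}. real n powr (-a-1)) \<le> real m powr (-a)"
    using tele[OF a m True] by linarith
  then show ?thesis using a by (simp add: field_simps)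
next
  case False
  then show ?thesis using a by simp
qed

lemma grid:
  fixes h :: "real \<Rightarrow> real" and m T :: nat
  assumes m: "m \<ge> 1" and hnn: "\<And>x. h x \<ge> 0"
    and hmono: "\<And>x y. 1 \<le> x \<Longrightarrow> x \<le> y \<Longrightarrow> h y \<le> h x"
  shows "(\<Sum>n\<in>{m<..T}. \<Sum>k\<in>{-int T..int T}. h (real n ^ 2 + real_of_int k ^ 2))
         \<le> (\<Sum>t\<in>{m<..T}. 4 * real t * h (real t ^ 2))"
proof (induction T)
  case 0
  then show ?case by simp
next
  case (Suc T)
  show ?case
  proof (cases "m \<le> T")
    case False
    then have "{m<..Suc T} = {}" by auto
    then show ?thesis by simp
  next
    case True
    define K where "K = {-int T..int T}"
    define K' where "K' = {-int (Suc T)..int (Suc T)}"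
    define H where "H = h (real (Suc T) ^ 2)"
    have K'K: "K' = insert (-int (Suc T)) (insert (int (Suc T)) K)"
      unfolding K_def K'_def by auto
    have fK: "finite K" unfolding K_def by simp
    have e: "{m<..Suc T} = insert (Suc T) {m<..T}" using True by auto
    have A: "(\<Sum>k\<in>K'. h (real n ^ 2 + real_of_int k ^ 2))
        \<le> (\<Sum>k\<in>K. h (real n ^ 2 + real_of_int k ^ 2)) + 2 * H" for n :: nat
    proof -
      have "(\<Sum>k\<in>K'. h (real n ^ 2 + real_of_int k ^ 2))
          = (\<Sum>k\<in>K. h (real n ^ 2 + real_of_int k ^ 2)) + 2 * h (real n ^ 2 + real (Suc T) ^ 2)"
      proof -
        have sq: "(- 1 - real T)^2 = (1 + real T)^2" by (simp add: power2_eq_square algebra_simps)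
        show ?thesis unfolding K'K using fK by (simp add: K_def sq)
      qed
      moreover have "h (real n ^ 2 + real (Suc T) ^ 2) \<le> H"
        unfolding H_def by (rule hmono) auto
      ultimately show ?thesis by simp
    qed
    have B: "(\<Sum>n\<in>{m<..T}. \<Sum>k\<in>K'. h (real n ^ 2 + real_of_int k ^ 2))
        \<le> (\<Sum>n\<in>{m<..T}. \<Sum>k\<in>K. h (real n ^ 2 + real_of_int k ^ 2)) + real (T - m) * (2 * H)"
    proof -
      have "(\<Sum>n\<in>{m<..T}. \<Sum>k\<in>K'. h (real n ^ 2 + real_of_int k ^ 2))
          \<le> (\<Sum>n\<in>{m<..T}. (\<Sum>k\<in>K. h (real n ^ 2 + real_of_int k ^ 2)) + 2 * H)"
        by (rule sum_mono) (rule A)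
      then show ?thesis by (simp add: sum.distrib)
    qed
    have C: "(\<Sum>k\<in>K'. h (real (Suc T) ^ 2 + real_of_int k ^ 2)) \<le> real (card K') * H"
    proof -
      have "(\<Sum>k\<in>K'. h (real (Suc T) ^ 2 + real_of_int k ^ 2)) \<le> (\<Sum>k\<in>K'. H)"
        unfolding H_def by (intro sum_mono hmono) auto
      then show ?thesis by simp
    qed
    have cK': "card K' = 2 * T + 3" unfolding K'_def by simp
    have H0: "H \<ge> 0" unfolding H_def by (rule hnn)
    have D: "real (T - m) * (2 * H) + real (2 * T + 3) * H \<le> 4 * real (Suc T) * H"
    proof -
      have "real (T - m) * 2 + real (2 * T + 3) \<le> 4 * real (Suc T)" using True m by simp
      from mult_right_mono[OF this H0] show ?thesis by (simp add: algebra_simps)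
    qed
    have "(\<Sum>n\<in>{m<..Suc T}. \<Sum>k\<in>K'. h (real n ^ 2 + real_of_int k ^ 2))
        = (\<Sum>n\<in>{m<..T}. \<Sum>k\<in>K'. h (real n ^ 2 + real_of_int k ^ 2))
          + (\<Sum>k\<in>K'. h (real (Suc T) ^ 2 + real_of_int k ^ 2))"
      unfolding e by simp
    also have "\<dots> \<le> (\<Sum>t\<in>{m<..T}. 4 * real t * h (real t ^ 2)) + 4 * real (Suc T) * H"
    proof -
      have C': "(\<Sum>k\<in>K'. h (real (Suc T) ^ 2 + real_of_int k ^ 2)) \<le> real (2 * T + 3) * H"
        using C cK' by simp
      show ?thesis using B C' D Suc.IH unfolding K_def by linarith
    qed
    also have "\<dots> = (\<Sum>t\<in>{m<..Suc T}. 4 * real t * h (real t ^ 2))"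
      unfolding e H_def by simp
    finally show ?thesis unfolding K'_def .
  qed
qed

lemma beta_nonneg: "\<nu> > 0 \<Longrightarrow> beta d \<nu> \<ge> 0"
  by (induction d \<nu> rule: beta.induct) auto

lemma beta_step: assumes "\<nu> > 0" shows "4 * beta (Suc d) \<nu> \<le> beta (Suc (Suc d)) \<nu>"
proof -
  have b: "beta (Suc d) \<nu> \<ge> 0" using beta_nonneg assms by blast
  have "2 / (2 * \<nu> + real (Suc d)) \<ge> 0" using assms by simp
  then have "4 * beta (Suc d) \<nu> \<le> (4 + 2 / (2 * \<nu> + real (Suc d))) * beta (Suc d) \<nu>"
    using b by (intro mult_right_mono) auto
  then show ?thesis by simp
qed

lemma sqnorm_upd:
  assumes "q \<in> Zlat j"
  shows "sqnorm (Suc j) (q(j:=k)) = sqnorm j q + (real_of_int k)^2"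
  unfolding sqnorm_def by (simp add: lessThan_Suc)

lemma t_bound:
  fixes t Q s :: real
  assumes t: "t \<ge> 1" and Q: "Q \<ge> 0"
  shows "t * (t^2 + Q) powr (-s) \<le> (t^2 + Q) powr (-s + 1/2)"
proof -
  have "t = (t^2) powr (1/2)" using t by (simp add: powr_half_sqrt)
  also have "\<dots> \<le> (t^2 + Q) powr (1/2)" using Q by (intro powr_mono2) auto
  finally have "t * (t^2 + Q) powr (-s) \<le> (t^2 + Q) powr (1/2) * (t^2 + Q) powr (-s)"
    by (intro mult_right_mono) auto
  also have "\<dots> = (t^2 + Q) powr (-s + 1/2)" by (simp add: powr_add[symmetric])
  finally show ?thesis .
qed

lemma Zlat0: "Zlat 0 = {\<lambda>_. 0}"
  unfolding Zlat_def by auto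

lemma Iterm_nonneg: "Iterm d \<nu> n q \<ge> 0"
  unfolding Iterm_def by simp

lemma Iterm1: "n > 0 \<Longrightarrow> Iterm 1 \<nu> n q = real n powr (-(2*\<nu>) - 1)"
proof -
  assume n: "n > 0"
  have "real n ^ 2 = real n powr 2" using n by (simp add: powr_numeral)
  then have "Iterm 1 \<nu> n q = (real n powr 2) powr (-\<nu> - 1/2)"
    unfolding Iterm_def sqnorm_def by simp
  also have "\<dots> = real n powr (2 * (-\<nu> - 1/2))" by (rule powr_powr)
  also have "\<dots> = real n powr (-(2*\<nu>) - 1)" by (simp add: algebra_simps)
  finally show ?thesis .
qed

lemma fin_base:
  assumes nu: "\<nu> > 0" and m: "m \<ge> 1" and F: "finite F" "F \<subseteq> {m<..} \<times> Zlat 0"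
  shows "(\<Sum>(n,q)\<in>F. Iterm 1 \<nu> n q) \<le> beta 1 \<nu> / real m powr (2*\<nu>)"
proof -
  define T where "T = (\<Sum>p\<in>F. fst p)"
  have FT: "F \<subseteq> {m<..T} \<times> {\<lambda>_. 0}"
  proof
    fix p assume p: "p \<in> F"
    have "fst p \<le> T" unfolding T_def using F(1) p by (intro member_le_sum) auto
    then show "p \<in> {m<..T} \<times> {\<lambda>_. 0}" using p F(2) Zlat0 by auto
  qed
  have "(\<Sum>(n,q)\<in>F. Iterm 1 \<nu> n q) \<le> (\<Sum>(n,q)\<in>{m<..T} \<times> {\<lambda>_. 0}. Iterm 1 \<nu> n q)"
    by (rule sum_mono2[OF _ FT]) (auto simp: Iterm_nonneg)
  also have "\<dots> = (\<Sum>n\<in>{m<..T}. Iterm 1 \<nu> n (\<lambda>_. 0))"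
    by (simp add: sum.cartesian_product[symmetric])
  also have "\<dots> = (\<Sum>n\<in>{m<..T}. real n powr (-(2*\<nu>) - 1))"
    by (intro sum.cong refl Iterm1) auto
  also have "\<dots> \<le> real m powr (-(2*\<nu>)) / (2*\<nu>)"
    using tele2[of "2*\<nu>" m T] nu m by simp
  also have "\<dots> = beta 1 \<nu> / real m powr (2*\<nu>)"
    by (simp add: powr_minus divide_simps)
  finally show ?thesis .
qed

lemma fin_step:
  assumes nu: "\<nu> > 0" and m: "m \<ge> 1"
    and IH: "\<And>G. finite G \<Longrightarrow> G \<subseteq> {m<..} \<times> Zlat d \<Longrightarrow> (\<Sum>(n,q)\<in>G. Iterm (Suc d) \<nu> n q) \<le> B"
    and F: "finite F" "F \<subseteq> {m<..} \<times> Zlat (Suc d)"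
  shows "(\<Sum>(n,q)\<in>F. Iterm (Suc (Suc d)) \<nu> n q) \<le> 4 * B"
proof -
  define T where "T = (\<Sum>p\<in>F. fst p + nat \<bar>snd p d\<bar>)"
  define Q' where "Q' = (\<lambda>p. (snd p)(d:=0)) ` F"
  define K where "K = {-int T..int T}"
  define \<phi> where "\<phi> = (\<lambda>(n::nat,q'::nat\<Rightarrow>int,k::int). (n, q'(d:=k)))"
  define D where "D = {m<..T} \<times> Q' \<times> K"
  define h where "h = (\<lambda>q' x. (x + sqnorm d q') powr (-\<nu> - real (Suc (Suc d)) / 2))"
  have fQ: "finite Q'" unfolding Q'_def using F by simp
  have QZ: "Q' \<subseteq> Zlat d" unfolding Q'_def Zlat_def using F(2) 
    by (auto simp: Zlat_def)
  have fD: "finite D" unfolding D_def K_def using fQ by simp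
  have FD: "F \<subseteq> \<phi> ` D"
  proof
    fix p assume p: "p \<in> F"
    obtain n q where pq: "p = (n, q)" by (cases p)
    have "fst p + nat \<bar>snd p d\<bar> \<le> T" unfolding T_def using F(1) p by (intro member_le_sum) auto
    then have nT: "n \<le> T" and kT: "\<bar>q d\<bar> \<le> int T" using pq by auto
    have "(n, q(d:=0), q d) \<in> D" unfolding D_def K_def Q'_def using p pq nT kT F(2) by force
    moreover have "p = \<phi> (n, q(d:=0), q d)" unfolding \<phi>_def pq by simp
    ultimately show "p \<in> \<phi> ` D" by blast
  qed
  have inj: "inj_on \<phi> D"
  proof (rule inj_onI)
    fix x y assume x: "x \<in> D" and y: "y \<in> D" and e: "\<phi> x = \<phi> y"
    obtain n1 q1 k1 where x1: "x = (n1, q1, k1)" by (cases x) auto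
    obtain n2 q2 k2 where y2: "y = (n2, q2, k2)" by (cases y) auto
    have q1d: "q1 d = 0" "q2 d = 0" using x y x1 y2 QZ unfolding D_def Zlat_def by auto
    have e2: "n1 = n2" "q1(d:=k1) = q2(d:=k2)" using e x1 y2 unfolding \<phi>_def by auto
    have "k1 = k2" using fun_cong[OF e2(2), of d] by simp
    moreover have "q1 = q2"
    proof
      fix i show "q1 i = q2 i"
        using fun_cong[OF e2(2), of i] q1d by (cases "i = d") auto
    qed
    ultimately show "x = y" using x1 y2 e2 by simp
  qed
  have hval: "Iterm (Suc (Suc d)) \<nu> n (q'(d:=k)) = h q' (real n ^ 2 + real_of_int k ^ 2)"
    if "q' \<in> Q'" for n q' k
  proof -
    have "q' \<in> Zlat d" using that QZ by auto
    then show ?thesis unfolding Iterm_def h_def by (simp add: sqnorm_upd add_ac)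
  qed
  have "(\<Sum>(n,q)\<in>F. Iterm (Suc (Suc d)) \<nu> n q) \<le> (\<Sum>(n,q)\<in>\<phi> ` D. Iterm (Suc (Suc d)) \<nu> n q)"
    by (rule sum_mono2[OF _ FD]) (auto simp: Iterm_nonneg fD)
  also have "\<dots> = (\<Sum>x\<in>D. (\<lambda>(n,q). Iterm (Suc (Suc d)) \<nu> n q) (\<phi> x))"
    by (rule sum.reindex[OF inj, unfolded comp_def])
  also have "\<dots> = (\<Sum>(n,q',k)\<in>D. Iterm (Suc (Suc d)) \<nu> n (q'(d:=k)))"
    unfolding \<phi>_def by (simp add: case_prod_beta)
  also have "\<dots> = (\<Sum>n\<in>{m<..T}. \<Sum>q'\<in>Q'. \<Sum>k\<in>K. Iterm (Suc (Suc d)) \<nu> n (q'(d:=k)))"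
    unfolding D_def by (simp add: sum.cartesian_product)
  also have "\<dots> = (\<Sum>q'\<in>Q'. \<Sum>n\<in>{m<..T}. \<Sum>k\<in>K. Iterm (Suc (Suc d)) \<nu> n (q'(d:=k)))"
    by (rule sum.swap)
  also have "\<dots> = (\<Sum>q'\<in>Q'. \<Sum>n\<in>{m<..T}. \<Sum>k\<in>K. h q' (real n ^ 2 + real_of_int k ^ 2))"
    by (intro sum.cong refl) (simp add: hval)
  also have "\<dots> \<le> (\<Sum>q'\<in>Q'. \<Sum>t\<in>{m<..T}. 4 * real t * h q' (real t ^ 2))"
  proof (rule sum_mono)
    fix q' assume "q' \<in> Q'"
    have Q0: "sqnorm d q' \<ge> 0" unfolding sqnorm_def by (simp add: sum_nonneg)
    show "(\<Sum>n\<in>{m<..T}. \<Sum>k\<in>K. h q' (real n ^ 2 + real_of_int k ^ 2))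
          \<le> (\<Sum>t\<in>{m<..T}. 4 * real t * h q' (real t ^ 2))"
      unfolding K_def
    proof (rule grid[OF m])
      show "h q' x \<ge> 0" for x unfolding h_def by simp
      show "h q' y \<le> h q' x" if "1 \<le> x" "x \<le> y" for x y
        unfolding h_def using that Q0 nu by (intro powr_mono2') auto
    qed
  qed
  also have "\<dots> \<le> (\<Sum>q'\<in>Q'. \<Sum>t\<in>{m<..T}. 4 * Iterm (Suc d) \<nu> t q')"
  proof (intro sum_mono)
    fix q' t assume t: "t \<in> {m<..T}"
    have Q0: "sqnorm d q' \<ge> 0" unfolding sqnorm_def by (simp add: sum_nonneg)
    have t1: "real t \<ge> 1" using t m by auto
    have ex: "-(\<nu> + real (Suc (Suc d)) / 2) + 1/2 = -\<nu> - real (Suc d) / 2"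
      by (simp add: field_simps)
    have ex2: "-(\<nu> + real (Suc (Suc d)) / 2) = -\<nu> - real (Suc (Suc d)) / 2" by simp
    from t_bound[OF t1 Q0, of "\<nu> + real (Suc (Suc d)) / 2", unfolded ex, unfolded ex2]
    have "real t * h q' (real t ^ 2) \<le> Iterm (Suc d) \<nu> t q'"
      unfolding h_def Iterm_def by (simp add: add_ac)
    then show "4 * real t * h q' (real t ^ 2) \<le> 4 * Iterm (Suc d) \<nu> t q'" by simp
  qed
  also have "\<dots> = 4 * (\<Sum>(t,q')\<in>{m<..T} \<times> Q'. Iterm (Suc d) \<nu> t q')"
    by (simp add: sum_distrib_left sum.cartesian_product[symmetric] sum.swap[of _ Q'])
  also have "\<dots> \<le> 4 * B"
  proof -
    have "{m<..T} \<times> Q' \<subseteq> {m<..} \<times> Zlat d" using QZ by auto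
    then show ?thesis using IH[of "{m<..T} \<times> Q'"] fQ by simp
  qed
  finally show ?thesis .
qed

lemma fin_bound:
  assumes nu: "\<nu> > 0" and m: "m \<ge> 1"
  shows "finite F \<Longrightarrow> F \<subseteq> {m<..} \<times> Zlat d \<Longrightarrow>
    (\<Sum>(n,q)\<in>F. Iterm (Suc d) \<nu> n q) \<le> beta (Suc d) \<nu> / real m powr (2*\<nu>)"
proof (induction d arbitrary: F)
  case 0
  then show ?case using fin_base[OF nu m] by simp
next
  case (Suc d)
  have "(\<Sum>(n,q)\<in>F. Iterm (Suc (Suc d)) \<nu> n q) \<le> 4 * (beta (Suc d) \<nu> / real m powr (2*\<nu>))"
    by (rule fin_step[OF nu m Suc.IH Suc.prems])
  also have "\<dots> \<le> beta (Suc (Suc d)) \<nu> / real m powr (2*\<nu>)"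
    using beta_step[OF nu, of d] by (simp add: divide_right_mono)
  finally show ?case .
qed

lemma beta5:
  assumes nu: "\<nu> \<ge> 1/2"
  shows "beta (Suc k) \<nu> \<le> 5 ^ k / (2 * \<nu>)"
proof (induction k)
  case 0
  then show ?case by simp
next
  case (Suc k)
  have b: "beta (Suc k) \<nu> \<ge> 0" using beta_nonneg nu by simp
  have "2 / (2 * \<nu> + real (Suc k)) \<le> 1" using nu by (simp add: field_simps)
  then have "4 + 2 / (2 * \<nu> + real (Suc k)) \<le> 5" by simp
  then have "beta (Suc (Suc k)) \<nu> \<le> 5 * beta (Suc k) \<nu>"
    using b by (simp add: mult_right_mono)
  also have "\<dots> \<le> 5 * (5 ^ k / (2 * \<nu>))" using Suc.IH by simp
  finally show ?case by simp
qed

theorem lemma3p4: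
  fixes \<nu> :: real and d m :: nat
  assumes "\<nu> > 0" and "d \<ge> 1" and "m \<ge> 1"
  shows "(\<lambda>(n, q). Iterm d \<nu> n q) summable_on ({m<..} \<times> Zlat (d - 1))
         \<and> I d \<nu> m \<le> beta d \<nu> / real m powr (2 * \<nu>)
         \<and> (\<nu> \<ge> 1/2 \<longrightarrow> (\<forall>d'\<ge>1. beta d' \<nu> \<le> 5 ^ (d' - 1) / (2 * \<nu>)))"
proof -
  obtain d0 where d0: "d = Suc d0" using assms(2) by (cases d) auto
  define f where "f = (\<lambda>(n, q). Iterm d \<nu> n q)"
  define A where "A = {m<..} \<times> Zlat (d - 1)"
  define b where "b = beta d \<nu> / real m powr (2 * \<nu>)"
  have fb: "sum f F \<le> b" if "finite F" "F \<subseteq> A" for F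
    using fin_bound[OF assms(1,3) that[unfolded A_def]] unfolding f_def b_def d0 by simp
  have sm: "f summable_on A"
  proof (rule nonneg_bdd_above_summable_on)
    show "f x \<ge> 0" for x unfolding f_def by (simp add: Iterm_nonneg split: prod.splits)
    show "bdd_above (sum f ` {F. F \<subseteq> A \<and> finite F})"
      using fb by (intro bdd_aboveI[of _ b]) auto
  qed
  have "I d \<nu> m = infsum f A"
    unfolding I_def f_def A_def
    using infsum_Sigma'_banach[of "\<lambda>n q. Iterm d \<nu> n q" "{m<..}" "\<lambda>_. Zlat (d - 1)"] sm
    unfolding f_def A_def by simp
  also have "\<dots> \<le> b" by (rule infsum_le_finite_sums[OF sm fb])
  finally have Ib: "I d \<nu> m \<le> b" .
  have B5: "\<nu> \<ge> 1/2 \<longrightarrow> (\<forall>d'\<ge>1. beta d' \<nu> \<le> 5 ^ (d' - 1) / (2 * \<nu>))"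
  proof (intro impI allI)
    fix d' :: nat assume nu: "\<nu> \<ge> 1/2" and d1: "d' \<ge> 1"
    show "beta d' \<nu> \<le> 5 ^ (d' - 1) / (2 * \<nu>)"
      using beta5[OF nu, of "d' - 1"] d1 by (cases d') auto
  qed
  show ?thesis using sm Ib B5 unfolding f_def A_def b_def by simp
qed

end
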